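(* Consider a mixture of $m=2$ Bernoulli components with $D=2$ features, true distribution $p^*=\pi_1^*B(\cdot\mid\boldsymbol\mu_1^* )+\pi_2^*B(\cdot\mid\boldsymbol\mu_2^* )$ with $\pi_1^*\in(0,1)$. Assume $\sigma_{12}\ne0$ and $\overline{\mathbf x}\in(0,1)^D$. Run population EM with $\pi_1=\epsilon$ small, $\boldsymbol\mu_2=\overline{\mathbf x}$, and $\boldsymbol\mu_1$ initialized uniformly at random in $[0,1]^D$. Then, with probability $1$, $\boldsymbol\lambda$ converges to the positive regions $\mathbb R^2_{++}\cup(-\mathbb R^2_{++})$ at a linear rate. Therefore EM almost surely escapes one-cluster regions.
   Context: Model: $B(\mathbf x\mid\boldsymbol\mu)=\prod_i\mu_i^{x_i}(1-\mu_i)^{1-x_i}$ on $\{0,1\}^D$, fitted with the model $\pi_1B(\cdot\mid\boldsymbol\mu_1)+\pi_2B(\cdot\mid\boldsymbol\mu_2)$. Population EM sets $\tilde q_c=p^*\gamma_c/\pi_c$, where $\gamma_c=\pi_cB(\cdot\mid\boldsymbol\mu_c)/p(\cdot\mid\theta)$, and $Z_c=\int\tilde q_c$. It updates $\pi_c\leftarrow\pi_cZ_c$ and $\boldsymbol\mu_c\leftarrow$ the mean of $\tilde q_c/Z_c$. A one-cluster region means $\pi_1$ near $0$; escaping means $\pi_1$ grows away from $0$. Notation: - $\overline{\mathbf x}=\mathbb E_{p^*}[\mathbf x]$, $S_i=\overline x_i(1-\overline x_i)$ and $\boldsymbol\mu^*=(\boldsymbol\mu_1^*-\boldsymbol\mu_2^*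 )/2$. - $\mathbf b=\boldsymbol\mu_1-\overline{\mathbf x}$ and $\lambda_i=2S_i^{-1}\mu_i^*b_i$. - $\sigma_{12}=\mathbb E[x_1x_2]-\mathbb E[x_1]\mathbb E[x_2]=4\pi_1^*\pi_2^*\mu_1^*\mu_2^*$. *)

theory Defs
  imports "HOL-Analysis.Analysis" "HOL-Probability.Probability"
begin

definition binary_points :: "(real^'n) set" where
  "binary_points = {x. \<forall>i. x$i = 0 \<or> x$i = 1}"

definition bern :: "real^'n \<Rightarrow> real^'n \<Rightarrow> real" where
  "bern mu x = (\<Prod>i\<in>UNIV. (mu$i) ^ (if x$i = 1 then 1 else 0) * (1 - mu$i) ^ (if x$i = 1 then 0 else 1))"

definition pstar :: "real \<Rightarrow> real^'n \<Rightarrow> real^'n \<Rightarrow> real^'n \<Rightarrow> real" where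
  "pstar p1 m1 m2 x = p1 * bern m1 x + (1 - p1) * bern m2 x"

definition xbar :: "real \<Rightarrow> real^'n \<Rightarrow> real^'n \<Rightarrow> real^'n" where
  "xbar p1 m1 m2 = (\<Sum>x\<in>binary_points. pstar p1 m1 m2 x *\<^sub>R x)"

definition Estar :: "real \<Rightarrow> real^'n \<Rightarrow> real^'n \<Rightarrow> (real^'n \<Rightarrow> real) \<Rightarrow> real" where
  "Estar p1 m1 m2 f = (\<Sum>x\<in>binary_points. pstar p1 m1 m2 x * f x)"

definition sigma12 :: "real \<Rightarrow> real^2 \<Rightarrow> real^2 \<Rightarrow> real" where
  "sigma12 p1 m1 m2 = Estar p1 m1 m2 (\<lambda>x. x$1 * x$2)
      - Estar p1 m1 m2 (\<lambda>x. x$1) * Estar p1 m1 m2 (\<lambda>x. x$2)"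

text \<open>One-cluster regime (pi_1 -> 0, mu_2 = xbar): p(.|theta) = B(.|xbar), and
  q~_1 = p* gamma_1 / pi_1 = p* B(.|mu_1) / B(.|xbar).\<close>
definition qtil1 :: "real \<Rightarrow> real^'n \<Rightarrow> real^'n \<Rightarrow> real^'n \<Rightarrow> real^'n \<Rightarrow> real" where
  "qtil1 p1 m1 m2 mu x = pstar p1 m1 m2 x * bern mu x / bern (xbar p1 m1 m2) x"

text \<open>Z_1 = integral of q~_1 (the multiplicative update factor of pi_1).\<close>
definition Z1 :: "real \<Rightarrow> real^'n \<Rightarrow> real^'n \<Rightarrow> real^'n \<Rightarrow> real" where
  "Z1 p1 m1 m2 mu = (\<Sum>x\<in>binary_points. qtil1 p1 m1 m2 mu x)"

definition em_mu1 :: "real \<Rightarrow> real^'n \<Rightarrow> real^'n \<Rightarrow> real^'n \<Rightarrow> real^'n" where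
  "em_mu1 p1 m1 m2 mu = (1 / Z1 p1 m1 m2 mu) *\<^sub>R (\<Sum>x\<in>binary_points. qtil1 p1 m1 m2 mu x *\<^sub>R x)"

text \<open>lambda_i = 2 S_i^{-1} mu*_i b_i with b = mu_1 - xbar, S_i = xbar_i (1 - xbar_i),
  mu* = (mu1* - mu2*)/2.\<close>
definition lam :: "real \<Rightarrow> real^'n \<Rightarrow> real^'n \<Rightarrow> real^'n \<Rightarrow> real^'n" where
  "lam p1 m1 m2 mu = (\<chi> i. 2 / ((xbar p1 m1 m2)$i * (1 - (xbar p1 m1 m2)$i))
        * ((m1$i - m2$i) / 2) * (mu$i - (xbar p1 m1 m2)$i))"

definition pos_regions :: "(real^'n) set" where
  "pos_regions = {v. \<forall>i. v$i > 0} \<union> {v. \<forall>i. v$i < 0}"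

end

theory Submission
  imports Defs
begin

definition Gm :: "real \<Rightarrow> real \<Rightarrow> real \<Rightarrow> real \<Rightarrow> real \<Rightarrow> real" where
  "Gm q00 q01 q10 q11 y = ((q00+q01)*(q11*y+q10)) / ((q10+q11)*(q01*y+q00))"

locale tab =
  fixes q00 q01 q10 q11 :: real
  assumes nn: "q00 \<ge> 0" "q01 \<ge> 0" "q10 \<ge> 0" "q11 \<ge> 0"
    and sp: "q11*q00 - q10*q01 > 0"
begin

lemma q00p: "q00 > 0" and q11p: "q11 > 0"
proof -
  have "q11*q00 > 0" using sp nn mult_nonneg_nonneg[of q10 q01] by linarith
  then have "q00 \<noteq> 0" "q11 \<noteq> 0" by auto
  then show "q00 > 0" "q11 > 0" using nn by auto
qed

lemma den_pos: "y > 0 \<Longrightarrow> q01*y+q00 > 0"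
  using nn q00p mult_nonneg_nonneg[of q01 y] by linarith

lemma num_pos: "y > 0 \<Longrightarrow> q11*y+q10 > 0"
  using nn q11p mult_pos_pos[of q11 y] by linarith

lemma m1p: "q10+q11 > 0" using nn q11p by linarith
lemma m0p: "q00+q01 > 0" using nn q00p by linarith

abbreviation "G \<equiv> Gm q00 q01 q10 q11"

lemma G_pos: "y > 0 \<Longrightarrow> G y > 0"
  unfolding Gm_def using den_pos num_pos m1p m0p by simp

lemma G_minus1: "y > 0 \<Longrightarrow> G y - 1 = (q11*q00 - q10*q01)*(y-1) / ((q10+q11)*(q01*y+q00))"
proof -
  assume y: "y > 0"
  have D: "(q10+q11)*(q01*y+q00) \<noteq> 0" using den_pos[OF y] m1p by simp
  have "G y - 1 = ((q00+q01)*(q11*y+q10) - (q10+q11)*(q01*y+q00)) / ((q10+q11)*(q01*y+q00))"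
    unfolding Gm_def using D by (simp add: field_simps)
  also have "(q00+q01)*(q11*y+q10) - (q10+q11)*(q01*y+q00) = (q11*q00 - q10*q01)*(y-1)"
    by (simp add: algebra_simps)
  finally show ?thesis .
qed

lemma G_minusy: "y > 0 \<Longrightarrow> y - G y = (y-1)*(q01*(q10+q11)*y + q10*(q00+q01)) / ((q10+q11)*(q01*y+q00))"
proof -
  assume y: "y > 0"
  have D: "(q10+q11)*(q01*y+q00) \<noteq> 0" using den_pos[OF y] m1p by simp
  have "y - G y = (y*((q10+q11)*(q01*y+q00)) - (q00+q01)*(q11*y+q10)) / ((q10+q11)*(q01*y+q00))"
    unfolding Gm_def using D by (simp add: field_simps)
  also have "y*((q10+q11)*(q01*y+q00)) - (q00+q01)*(q11*y+q10) = (y-1)*(q01*(q10+q11)*y + q10*(q00+q01))"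
    by (simp add: algebra_simps)
  finally show ?thesis .
qed

lemma G_diff: "y > 0 \<Longrightarrow> y' > 0 \<Longrightarrow> G y' - G y =
   (q00+q01)*(q11*q00 - q10*q01)*(y'-y) / ((q10+q11)*((q01*y'+q00)*(q01*y+q00)))"
proof -
  assume y: "y > 0" "y' > 0"
  have D: "q01*y+q00 \<noteq> 0" "q01*y'+q00 \<noteq> 0" "q10+q11 \<noteq> 0" using den_pos[OF y(1)] den_pos[OF y(2)] m1p by auto
  have g: "G z = ((q00+q01)/(q10+q11)) * ((q11*z+q10)/(q01*z+q00))" for z
    unfolding Gm_def by (rule times_divide_times_eq[symmetric])
  have "G y' - G y = ((q00+q01)/(q10+q11)) * ((q11*y'+q10)/(q01*y'+q00) - (q11*y+q10)/(q01*y+q00))"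
    unfolding g by (rule right_diff_distrib[symmetric])
  also have "(q11*y'+q10)/(q01*y'+q00) - (q11*y+q10)/(q01*y+q00)
     = ((q11*y'+q10)*(q01*y+q00) - (q11*y+q10)*(q01*y'+q00)) / ((q01*y'+q00)*(q01*y+q00))"
    using D(2) D(1) by (rule diff_frac_eq)
  also have "(q11*y'+q10)*(q01*y+q00) - (q11*y+q10)*(q01*y'+q00) = (q11*q00 - q10*q01)*(y'-y)"
    by (simp add: algebra_simps)
  also have "((q00+q01)/(q10+q11)) * ((q11*q00 - q10*q01)*(y'-y) / ((q01*y'+q00)*(q01*y+q00)))
      = ((q00+q01)*((q11*q00 - q10*q01)*(y'-y))) / ((q10+q11)*((q01*y'+q00)*(q01*y+q00)))"
    by (rule times_divide_times_eq)
  finally show ?thesis by (simp add: ac_simps)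
qed

lemma G_ge: "y \<ge> 1 \<Longrightarrow> 1 \<le> G y \<and> G y \<le> y"
proof -
  assume y: "y \<ge> 1"
  have d: "(q10+q11)*(q01*y+q00) > 0" using den_pos[of y] m1p y by simp
  have "G y - 1 = (q11*q00 - q10*q01)*(y-1) / ((q10+q11)*(q01*y+q00))" using G_minus1 y by simp
  also have "\<dots> \<ge> 0" using y sp d by (intro divide_nonneg_pos mult_nonneg_nonneg) auto
  finally have "G y - 1 \<ge> 0" .
  moreover have "y - G y \<ge> 0"
  proof -
    have "y - G y = (y-1)*(q01*(q10+q11)*y + q10*(q00+q01)) / ((q10+q11)*(q01*y+q00))" using G_minusy y by simp
    also have "\<dots> \<ge> 0" using y nn d by (intro divide_nonneg_pos mult_nonneg_nonneg add_nonneg_nonneg) auto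
    finally show ?thesis .
  qed
  ultimately show ?thesis by simp
qed

lemma G_le: "0 < y \<Longrightarrow> y \<le> 1 \<Longrightarrow> y \<le> G y \<and> G y \<le> 1"
proof -
  assume y: "0 < y" "y \<le> 1"
  have d: "(q10+q11)*(q01*y+q00) > 0" using den_pos[of y] m1p y by simp
  have "G y - 1 = (q11*q00 - q10*q01)*(y-1) / ((q10+q11)*(q01*y+q00))" using G_minus1 y by simp
  also have "\<dots> \<le> 0" using y sp d by (intro divide_nonpos_pos mult_nonneg_nonpos) auto
  finally have "G y - 1 \<le> 0" .
  moreover have "y - G y \<le> 0"
  proof -
    have "y - G y = (y-1)*(q01*(q10+q11)*y + q10*(q00+q01)) / ((q10+q11)*(q01*y+q00))" using G_minusy y by simp
    also have "\<dots> \<le> 0" using y nn d by (intro divide_nonpos_pos mult_nonpos_nonneg add_nonneg_nonneg mult_nonneg_nonneg) auto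
    finally show ?thesis .
  qed
  ultimately show ?thesis by simp
qed

lemma G_strict: "0 < y \<Longrightarrow> y < y' \<Longrightarrow> G y < G y'"
proof -
  assume y: "0 < y" "y < y'"
  have "G y' - G y > 0" using G_diff[of y y'] y sp m0p m1p den_pos[of y] den_pos[of y']
    by simp
  then show ?thesis by simp
qed

lemma G_mono: "0 < y \<Longrightarrow> y \<le> y' \<Longrightarrow> G y \<le> G y'"
  using G_strict by (cases "y = y'") (auto simp: less_le)

definition "kap = (q11*q00 - q10*q01) / ((q10+q11)*(q00+q01))"

lemma kap_pos: "kap > 0" unfolding kap_def using sp m0p m1p by simp

lemma G_lip: "0 < y \<Longrightarrow> y \<le> y' \<Longrightarrow> y' \<le> 1 \<Longrightarrow> G y' - G y \<ge> kap * (y'-y)"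
proof -
  assume y: "0 < y" "y \<le> y'" "y' \<le> 1"
  let ?s = "q11*q00 - q10*q01"
  have e1: "q01*y'+q00 \<le> q00+q01" using y nn mult_left_le[of y' q01] by linarith
  have e2: "q01*y+q00 \<le> q00+q01" using y nn mult_left_le[of y q01] by linarith
  have pp: "(q01*y'+q00)*(q01*y+q00) \<le> (q00+q01)*(q00+q01)"
    using e1 e2 den_pos[of y] den_pos[of y'] y by (intro mult_mono) auto
  have pos: "(q01*y'+q00)*(q01*y+q00) > 0" using den_pos[of y] den_pos[of y'] y by simp
  have c0: "q00+q01 \<noteq> 0" using m0p by simp
  have "kap * (y'-y) = (?s*(y'-y)) / ((q10+q11)*(q00+q01))"
    unfolding kap_def by simp
  also have "\<dots> = ((q00+q01)*(?s*(y'-y))) / ((q00+q01)*((q10+q11)*(q00+q01)))"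
    using c0 by (rule mult_divide_mult_cancel_left[symmetric])
  also have "\<dots> = (q00+q01)*?s*(y'-y) / ((q10+q11)*((q00+q01)*(q00+q01)))"
    by (simp add: ac_simps)
  also have "\<dots> \<le> (q00+q01)*?s*(y'-y) / ((q10+q11)*((q01*y'+q00)*(q01*y+q00)))"
  proof (rule divide_left_mono)
    show "(q10+q11)*((q01*y'+q00)*(q01*y+q00)) \<le> (q10+q11)*((q00+q01)*(q00+q01))"
      using pp m1p by (intro mult_left_mono) auto
    have "q01*y'+q00 > 0" "q01*y+q00 > 0" using den_pos y by auto
    note dp = this
    show "0 \<le> (q00+q01)*?s*(y'-y)" using m0p sp y by (intro mult_nonneg_nonneg) auto
    show "0 < (q10+q11)*((q00+q01)*(q00+q01)) * ((q10+q11)*((q01*y'+q00)*(q01*y+q00)))"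
      using m1p m0p dp by (intro mult_pos_pos) auto
  qed
  also have "\<dots> = G y' - G y" using G_diff[of y y'] y by simp
  finally show ?thesis .
qed

end

lemma tab_transp: assumes "tab q00 q01 q10 q11" shows "tab q00 q10 q01 q11"
proof -
  interpret tab q00 q01 q10 q11 by fact
  have "q11*q00 - q01*q10 > 0" using sp by (simp add: mult.commute)
  then show ?thesis unfolding tab_def using nn by simp
qed

locale gprops =
  fixes G :: "real \<Rightarrow> real" and k :: real
  assumes Gpos: "\<And>y. y > 0 \<Longrightarrow> G y > 0"
    and Gge: "\<And>y. y \<ge> 1 \<Longrightarrow> 1 \<le> G y \<and> G y \<le> y"
    and Gle: "\<And>y. 0 < y \<Longrightarrow> y \<le> 1 \<Longrightarrow> y \<le> G y \<and> G y \<le> 1"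
    and Gstrict: "\<And>y y'. 0 < y \<Longrightarrow> y < y' \<Longrightarrow> G y < G y'"
    and Gmono: "\<And>y y'. 0 < y \<Longrightarrow> y \<le> y' \<Longrightarrow> G y \<le> G y'"
    and Glip: "\<And>y y'. 0 < y \<Longrightarrow> y \<le> y' \<Longrightarrow> y' \<le> 1 \<Longrightarrow> G y' - G y \<ge> k * (y'-y)"
    and kpos: "k > 0"

lemma prod_le0_neg: "X*Y \<le> (0::real) \<Longrightarrow> X < 0 \<Longrightarrow> Y \<ge> 0"
  using mult_neg_neg[of X Y] by linarith
lemma prod_le0_pos: "X*Y \<le> (0::real) \<Longrightarrow> X > 0 \<Longrightarrow> Y \<le> 0"
  using mult_pos_pos[of X Y] by linarith

lemma prod_le0_pos2: "X*Y \<le> (0::real) \<Longrightarrow> Y > 0 \<Longrightarrow> X \<le> 0"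
  using mult_pos_pos[of X Y] by linarith

lemma quad_step:
  assumes g1: "gprops G1 k1" and g2: "gprops G2 k2"
    and a: "1 \<le> a" and b: "0 < b" "b \<le> 1"
    and bad: "(a * G1 b - 1) * (b * G2 a - 1) \<le> 0"
  shows "1 \<le> a * G1 b \<and> 0 < b * G2 a \<and> b * G2 a \<le> 1 \<and> a * G1 b \<le> a \<and> b \<le> b * G2 a"
proof -
  have h1: "b \<le> G1 b" "G1 b \<le> 1" using gprops.Gle[OF g1 b] by auto
  have h2: "1 \<le> G2 a" "G2 a \<le> a" using gprops.Gge[OF g2 a] by auto
  have A1: "a*b \<le> a * G1 b" using h1 a by (intro mult_left_mono) auto
  have A2: "a * G1 b \<le> a" using h1 a by (simp add: mult_left_le)
  have B1: "b \<le> b * G2 a" using h2 b by (simp add: mult_le_cancel_left1)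
  have B2: "b * G2 a \<le> b*a" using h2 b by (intro mult_left_mono) auto
  have c1: "1 \<le> a * G1 b"
  proof (rule ccontr)
    assume "\<not> 1 \<le> a * G1 b"
    hence "a * G1 b - 1 < 0" by simp
    with bad have "b * G2 a - 1 \<ge> 0" by (rule prod_le0_neg)
    thus False using A1 B2 \<open>a * G1 b - 1 < 0\<close> by (simp add: mult.commute)
  qed
  have c2: "b * G2 a \<le> 1"
  proof (rule ccontr)
    assume "\<not> b * G2 a \<le> 1"
    hence "b * G2 a - 1 > 0" by simp
    with bad have "a * G1 b - 1 \<le> 0" by (rule prod_le0_pos2)
    thus False using A1 B2 \<open>b * G2 a - 1 > 0\<close> by (simp add: mult.commute)
  qed
  show ?thesis using c1 c2 A2 B1 b by auto
qed

lemma quadIV: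
  assumes g1: "gprops G1 k1" and g2: "gprops G2 k2"
    and ra: "\<And>t. a (Suc t) = a t * G1 (b t)" and rb: "\<And>t. b (Suc t) = b t * G2 (a t)"
    and ra': "\<And>t. a' (Suc t) = a' t * G1 (b' t)" and rb': "\<And>t. b' (Suc t) = b' t * G2 (a' t)"
    and a0: "1 \<le> a 0" and b0: "0 < b 0" "b 0 \<le> 1"
    and lt: "a 0 < a' 0" "b 0 < b' 0"
    and bad: "\<And>t. (a t - 1) * (b t - 1) \<le> 0"
    and bad': "\<And>t. (a' t - 1) * (b' t - 1) \<le> 0"
  shows False
proof -
  have inv: "1 \<le> a t \<and> 0 < b t \<and> b t \<le> 1" for t
  proof (induction t)
    case 0 then show ?case using a0 b0 by simp
  next
    case (Suc t)
    then show ?case using quad_step[OF g1 g2, of "a t" "b t"] bad[of "Suc t"] ra rb by simp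
  qed
  have b'0: "b' 0 \<le> 1"
  proof (rule ccontr)
    assume "\<not> b' 0 \<le> 1"
    moreover have "a' 0 - 1 > 0" using a0 lt by simp
    ultimately show False using prod_le0_pos[OF bad'[of 0]] by simp
  qed
  have inv': "1 \<le> a' t \<and> 0 < b' t \<and> b' t \<le> 1 \<and> a' (Suc t) \<le> a' t" for t
  proof -
    have "1 \<le> a' t \<and> 0 < b' t \<and> b' t \<le> 1" 
    proof (induction t)
      case 0 then show ?case using a0 b0 lt b'0 by simp
    next
      case (Suc t)
      then show ?case using quad_step[OF g1 g2, of "a' t" "b' t"] bad'[of "Suc t"] ra' rb' by simp
    qed
    then show ?thesis using quad_step[OF g1 g2, of "a' t" "b' t"] bad'[of "Suc t"] ra' rb' by simp
  qed
  have a'dec: "a' t \<le> a' 0" for t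
    by (induction t) (use inv' order_trans in blast)+
  define \<delta> where "\<delta> = b' 0 - b 0"
  have dpos: "\<delta> > 0" using lt unfolding \<delta>_def by simp
  have ord: "a t \<le> a' t \<and> b' t - b t \<ge> \<delta>" for t
  proof (induction t)
    case 0 then show ?case using lt unfolding \<delta>_def by simp
  next
    case (Suc t)
    have bt: "b t \<le> b' t" using Suc dpos by simp
    have g1m: "G1 (b t) \<le> G1 (b' t)" using gprops.Gmono[OF g1, of "b t" "b' t"] inv[of t] bt by simp
    have g2m: "G2 (a t) \<le> G2 (a' t)" using gprops.Gmono[OF g2, of "a t" "a' t"] inv[of t] Suc by simp
    have g2ge: "1 \<le> G2 (a t)" using gprops.Gge[OF g2] inv[of t] by blast
    have g1p: "0 < G1 (b t)" using gprops.Gpos[OF g1] inv[of t] by blast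
    have "a t * G1 (b t) \<le> a' t * G1 (b' t)"
      using Suc g1m g1p inv[of t] by (intro mult_mono) auto
    moreover have "b' t * G2 (a' t) - b t * G2 (a t) \<ge> (b' t - b t) * G2 (a t)"
      using g2m inv'[of t] by (simp add: algebra_simps mult_left_mono)
    moreover have "(b' t - b t) * G2 (a t) \<ge> b' t - b t"
      using g2ge bt by (simp add: mult_le_cancel_left1)
    ultimately show ?case using Suc ra rb ra' rb' by simp
  qed
  define R where "R t = a' t / a t" for t
  have Rge: "R t \<ge> 1" for t using ord[of t] inv[of t] unfolding R_def by simp
  have Rstep: "R (Suc t) \<ge> R t + k1 * \<delta>" for t
  proof -
    have bt: "b t \<le> b' t" using ord[of t] dpos by simp
    have lip: "G1 (b' t) - G1 (b t) \<ge> k1 * (b' t - b t)"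
      using gprops.Glip[OF g1, of "b t" "b' t"] inv[of t] inv'[of t] bt by simp
    have "k1 * (b' t - b t) \<ge> k1 * \<delta>" using ord[of t] gprops.kpos[OF g1] by simp
    with lip have l2: "G1 (b' t) \<ge> G1 (b t) + k1 * \<delta>" by simp
    have g1p: "0 < G1 (b t)" "G1 (b t) \<le> 1" using gprops.Gpos[OF g1] gprops.Gle[OF g1] inv[of t] by auto
    have q1: "G1 (b' t) / G1 (b t) \<ge> (G1 (b t) + k1 * \<delta>) / G1 (b t)"
      using l2 g1p by (simp add: divide_right_mono)
    have q2: "(G1 (b t) + k1 * \<delta>) / G1 (b t) = 1 + k1 * \<delta> / G1 (b t)" using g1p by (simp add: field_simps)
    have q3: "k1 * \<delta> / G1 (b t) \<ge> k1 * \<delta>"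
      using g1p gprops.kpos[OF g1] dpos by (simp add: le_divide_eq mult_left_le)
    have q: "G1 (b' t) / G1 (b t) \<ge> 1 + k1 * \<delta>" using q1 q2 q3 by linarith
    have "R (Suc t) = R t * (G1 (b' t) / G1 (b t))" unfolding R_def using ra ra' by simp
    also have "\<dots> \<ge> R t * (1 + k1 * \<delta>)" using q Rge[of t] by (intro mult_left_mono) auto
    moreover have "R t * (k1 * \<delta>) \<ge> 1 * (k1 * \<delta>)"
      using Rge[of t] gprops.kpos[OF g1] dpos by (intro mult_right_mono) auto
    moreover have "R t * (1 + k1 * \<delta>) = R t + R t * (k1 * \<delta>)" by (simp add: distrib_left)
    ultimately show ?thesis by linarith
  qed
  have Rlin: "R t \<ge> 1 + real t * (k1 * \<delta>)" for t
  proof (induction t)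
    case 0 then show ?case using Rge[of 0] by simp
  next
    case (Suc t) then show ?case using Rstep[of t] by (simp add: algebra_simps)
  qed
  have Rbd: "R t \<le> a' 0" for t
  proof -
    have "a' t / a t \<le> a' t / 1" using inv[of t] inv'[of t] by (intro divide_left_mono) auto
    then have "R t \<le> a' t" unfolding R_def by simp
    thus ?thesis using a'dec[of t] by simp
  qed
  have kd: "k1 * \<delta> > 0" using gprops.kpos[OF g1] dpos by simp
  obtain n :: nat where n: "real n > a' 0 / (k1 * \<delta>)" using reals_Archimedean2 by blast
  hence "real n * (k1 * \<delta>) > a' 0" using kd by (simp add: divide_less_eq)
  thus False using Rlin[of n] Rbd[of n] by simp
qed


lemma anti:
  assumes g1: "gprops G1 k1" and g2: "gprops G2 k2"
    and ra: "\<And>t. a (Suc t) = a t * G1 (b t)" and rb: "\<And>t. b (Suc t) = b t * G2 (a t)"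
    and ra': "\<And>t. a' (Suc t) = a' t * G1 (b' t)" and rb': "\<And>t. b' (Suc t) = b' t * G2 (a' t)"
    and pos: "0 < a 0" "0 < b 0"
    and le: "a 0 \<le> a' 0" "b 0 \<le> b' 0" and ne: "a 0 \<noteq> a' 0 \<or> b 0 \<noteq> b' 0"
    and bad: "\<And>t. (a t - 1) * (b t - 1) \<le> 0"
    and bad': "\<And>t. (a' t - 1) * (b' t - 1) \<le> 0"
  shows False
proof -
  have G1p: "G1 (b 0) > 0" "G2 (a 0) > 0" using gprops.Gpos[OF g1] gprops.Gpos[OF g2] pos by auto
  have m1: "G1 (b 0) \<le> G1 (b' 0)" "G2 (a 0) \<le> G2 (a' 0)"
    using gprops.Gmono[OF g1] gprops.Gmono[OF g2] pos le by auto
  have l1: "a 1 < a' 1"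
  proof (cases "a 0 < a' 0")
    case True
    have "a 0 * G1 (b 0) < a' 0 * G1 (b 0)" using True G1p by simp
    also have "\<dots> \<le> a' 0 * G1 (b' 0)" using m1 pos le by (intro mult_left_mono) auto
    finally show ?thesis using ra ra' by simp
  next
    case False
    hence e: "a 0 = a' 0" and "b 0 < b' 0" using le ne by auto
    hence "G1 (b 0) < G1 (b' 0)" using gprops.Gstrict[OF g1] pos by auto
    thus ?thesis using ra ra' e pos by simp
  qed
  have l2: "b 1 < b' 1"
  proof (cases "b 0 < b' 0")
    case True
    have "b 0 * G2 (a 0) < b' 0 * G2 (a 0)" using True G1p by simp
    also have "\<dots> \<le> b' 0 * G2 (a' 0)" using m1 pos le by (intro mult_left_mono) auto
    finally show ?thesis using rb rb' by simp
  next
    case False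
    hence e: "b 0 = b' 0" and "a 0 < a' 0" using le ne by auto
    hence "G2 (a 0) < G2 (a' 0)" using gprops.Gstrict[OF g2] pos by auto
    thus ?thesis using rb rb' e pos by simp
  qed
  have p1: "a 1 > 0" "b 1 > 0" using ra rb pos G1p by auto
  have badS: "\<And>t. (a (Suc t) - 1) * (b (Suc t) - 1) \<le> 0" using bad by blast
  have bad'S: "\<And>t. (a' (Suc t) - 1) * (b' (Suc t) - 1) \<le> 0" using bad' by blast
  have "(a 1 \<ge> 1 \<and> b 1 \<le> 1) \<or> (a 1 \<le> 1 \<and> b 1 \<ge> 1)"
  proof (cases "a 1 > 1")
    case True then show ?thesis using prod_le0_pos[OF bad[of 1]] by simp
  next
    case False
    show ?thesis
    proof (cases "a 1 < 1")
      case True then show ?thesis using prod_le0_neg[OF bad[of 1]] by simp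
    qed (use False in auto)
  qed
  then show False
  proof
    assume c: "a 1 \<ge> 1 \<and> b 1 \<le> 1"
    show False
      apply (rule quadIV[OF g1 g2, of "\<lambda>t. a (Suc t)" "\<lambda>t. b (Suc t)" "\<lambda>t. a' (Suc t)" "\<lambda>t. b' (Suc t)"])
      using ra rb ra' rb' c p1 l1 l2 badS bad'S by auto
  next
    assume c: "a 1 \<le> 1 \<and> b 1 \<ge> 1"
    show False
      apply (rule quadIV[OF g2 g1, of "\<lambda>t. b (Suc t)" "\<lambda>t. a (Suc t)" "\<lambda>t. b' (Suc t)" "\<lambda>t. a' (Suc t)"])
      using ra rb ra' rb' c p1 l1 l2 badS bad'S by (auto simp: mult.commute)
  qed
qed

lemma goodI:
  assumes g1: "gprops G1 k1" and g2: "gprops G2 k2"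
    and ra: "\<And>t. a (Suc t) = a t * G1 (b t)" and rb: "\<And>t. b (Suc t) = b t * G2 (a t)"
    and pos: "0 < a T" "0 < b T"
    and gd: "(a T - 1) * (b T - 1) > 0"
  shows "(1 < a T \<and> 1 < b T \<and> a T \<le> a (T+n) \<and> b T \<le> b (T+n)) \<or>
         (a T < 1 \<and> b T < 1 \<and> 0 < a (T+n) \<and> a (T+n) \<le> a T \<and> 0 < b (T+n) \<and> b (T+n) \<le> b T)"
proof -
  have "(1 < a T \<and> 1 < b T) \<or> (a T < 1 \<and> b T < 1)"
    using gd by (simp add: zero_less_mult_iff)
  then show ?thesis
  proof
    assume c: "1 < a T \<and> 1 < b T"
    have "a T \<le> a (T+n) \<and> b T \<le> b (T+n)"
    proof (induction n)
      case 0 then show ?case by simp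
    next
      case (Suc n)
      have h1: "1 \<le> G1 (b (T+n))" "1 \<le> G2 (a (T+n))"
        using gprops.Gge[OF g1] gprops.Gge[OF g2] Suc c by auto
      have "a (T+n) \<le> a (T+n) * G1 (b (T+n))" "b (T+n) \<le> b (T+n) * G2 (a (T+n))"
        using h1 Suc c by (auto simp: mult_le_cancel_left1)
      then show ?case using Suc ra rb by simp
    qed
    then show ?thesis using c by simp
  next
    assume c: "a T < 1 \<and> b T < 1"
    have "0 < a (T+n) \<and> a (T+n) \<le> a T \<and> 0 < b (T+n) \<and> b (T+n) \<le> b T"
    proof (induction n)
      case 0 then show ?case using pos by simp
    next
      case (Suc n)
      have h1: "G1 (b (T+n)) \<le> 1" "G2 (a (T+n)) \<le> 1" "0 < G1 (b (T+n))" "0 < G2 (a (T+n))"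
        using gprops.Gle[OF g1] gprops.Gle[OF g2] gprops.Gpos[OF g1] gprops.Gpos[OF g2] Suc c by auto
      have x1: "a (T+n) * G1 (b (T+n)) \<le> a (T+n)" "b (T+n) * G2 (a (T+n)) \<le> b (T+n)"
        using h1 Suc by (auto simp: mult_left_le)
      have x2: "0 < a (T+n) * G1 (b (T+n))" "0 < b (T+n) * G2 (a (T+n))" using h1 Suc by auto
      have "a (T+n) * G1 (b (T+n)) \<le> a T" "b (T+n) * G2 (a (T+n)) \<le> b T" using x1 Suc by linarith+
      with x2 have "0 < a (Suc (T+n)) \<and> a (Suc (T+n)) \<le> a T \<and> 0 < b (Suc (T+n)) \<and> b (Suc (T+n)) \<le> b T"
        unfolding ra rb by simp
      then show ?case by simp
    qed
    then show ?thesis using c by simp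
  qed
qed


lemma tab_gprops: assumes "tab q00 q01 q10 q11" shows "gprops (Gm q00 q01 q10 q11) (tab.kap q00 q01 q10 q11)"
proof -
  interpret tab q00 q01 q10 q11 by fact
  show ?thesis
  proof
    show "\<And>y. y > 0 \<Longrightarrow> G y > 0" by (rule G_pos)
    show "\<And>y. y \<ge> 1 \<Longrightarrow> 1 \<le> G y \<and> G y \<le> y" by (rule G_ge)
    show "\<And>y. 0 < y \<Longrightarrow> y \<le> 1 \<Longrightarrow> y \<le> G y \<and> G y \<le> 1" by (rule G_le)
    show "\<And>y y'. 0 < y \<Longrightarrow> y < y' \<Longrightarrow> G y < G y'" by (rule G_strict)
    show "\<And>y y'. 0 < y \<Longrightarrow> y \<le> y' \<Longrightarrow> G y \<le> G y'" by (rule G_mono)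
    show "\<And>y y'. 0 < y \<Longrightarrow> y \<le> y' \<Longrightarrow> y' \<le> 1 \<Longrightarrow> G y' - G y \<ge> kap * (y'-y)" by (rule G_lip)
    show "kap > 0" by (rule kap_pos)
  qed
qed

lemma abs_opp: "(u::real)*w < 0 \<Longrightarrow> \<bar>u - w\<bar> = \<bar>u\<bar> + \<bar>w\<bar>"
proof -
  assume "u*w < 0"
  then have "(0<u \<and> w<0) \<or> (u<0 \<and> 0<w)" by (simp add: mult_less_0_iff)
  then show ?thesis
  proof
    assume "0<u \<and> w<0" then show ?thesis by (simp add: abs_of_pos abs_of_neg)
  next
    assume "u<0 \<and> 0<w" then show ?thesis by (simp add: abs_of_pos abs_of_neg)
  qed
qed

lemma negl_anti:
  fixes S :: "(real^2) set" and s :: real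
  assumes s: "s = 1 \<or> s = -1"
    and H: "\<And>x y. x \<in> S \<Longrightarrow> y \<in> S \<Longrightarrow> x \<noteq> y \<Longrightarrow> s*(x$1-y$1)*(x$2-y$2) < 0"
  shows "negligible S"
proof -
  define g where "g x = (x$1 - s*x$2) *\<^sub>R (axis 1 1 :: real^2)" for x :: "real^2"
  have key: "norm (x - y) \<le> norm (g x - g y)" if "x \<in> S" "y \<in> S" for x y
  proof (cases "x = y")
    case True then show ?thesis by simp
  next
    case False
    let ?d1 = "x$1-y$1" and ?d2 = "x$2-y$2"
    have h: "s*?d1*?d2 < 0" using H[OF that False] .
    have "norm (x - y) \<le> \<bar>?d1\<bar> + \<bar>?d2\<bar>" using norm_le_l1_cart[of "x-y"] by (simp add: sum_2)
    also have "\<dots> = \<bar>?d1 - s*?d2\<bar>"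
    proof -
      have "?d1 * (s*?d2) < 0" using h by (simp add: mult.assoc mult.left_commute)
      then have "\<bar>?d1 - s*?d2\<bar> = \<bar>?d1\<bar> + \<bar>s*?d2\<bar>" by (rule abs_opp)
      moreover have "\<bar>s*?d2\<bar> = \<bar>?d2\<bar>" using s by (auto simp: abs_mult)
      ultimately show ?thesis by simp
    qed
    also have "\<dots> = norm (g x - g y)"
    proof -
      have "g x - g y = ((x$1 - s*x$2) - (y$1 - s*y$2)) *\<^sub>R (axis 1 1 :: real^2)"
        unfolding g_def by (rule scaleR_diff_left[symmetric])
      moreover have "(x$1 - s*x$2) - (y$1 - s*y$2) = ?d1 - s*?d2" by (simp add: algebra_simps)
      ultimately show ?thesis by simp
    qed
    finally show ?thesis .
  qed
  have inj: "inj_on g S"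
  proof (rule inj_onI)
    fix x y assume "x \<in> S" "y \<in> S" "g x = g y"
    then show "x = y" using key[of x y] by simp
  qed
  define h where "h = the_inv_into S g"
  have hS: "h ` (g ` S) = S" unfolding h_def using inj by (simp add: the_inv_into_onto)
  have negT: "negligible (g ` S)"
  proof (rule negligible_subset[OF negligible_standard_hyperplane_cart[of 2]])
    show "g ` S \<subseteq> {x. x $ 2 = 0}" unfolding g_def by (auto simp: axis_def)
  qed
  have "negligible (h ` (g ` S))"
  proof (rule negligible_locally_Lipschitz_image[OF order_refl negT])
    fix z assume "z \<in> g ` S"
    then obtain x where x: "x \<in> S" "z = g x" by auto
    show "\<exists>T B. open T \<and> z \<in> T \<and> (\<forall>y\<in>g ` S \<inter> T. norm (h y - h z) \<le> B * norm (y - z))"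
    proof (intro exI[of _ UNIV] exI[of _ 1] conjI ballI)
      fix y assume "y \<in> g ` S \<inter> UNIV"
      then obtain x' where x': "x' \<in> S" "y = g x'" by auto
      have "h y = x'" "h z = x" unfolding h_def using x x' inj by (auto simp: the_inv_into_f_f)
      then show "norm (h y - h z) \<le> 1 * norm (y - z)" using key[OF x'(1) x(1)] x x' by simp
    qed auto
  qed
  then show ?thesis using hS by simp
qed

abbreviation v2 :: "real \<Rightarrow> real \<Rightarrow> real^2" where "v2 a b \<equiv> vector [a, b]"

lemma two_ne: "(1::2) \<noteq> 2" by simp

lemma vec2_eq: "(x::real^2) = v2 (x$1) (x$2)"
  by (simp add: vec_eq_iff forall_2)

lemma binary_points_2: "(binary_points :: (real^2) set) = {v2 0 0, v2 0 1, v2 1 0, v2 1 1}"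
proof (intro set_eqI iffI)
  fix x :: "real^2" assume "x \<in> binary_points"
  then have "(x$1 = 0 \<or> x$1 = 1) \<and> (x$2 = 0 \<or> x$2 = 1)" unfolding binary_points_def by auto
  then show "x \<in> {v2 0 0, v2 0 1, v2 1 0, v2 1 1}" using vec2_eq[of x] by auto
next
  fix x :: "real^2" assume "x \<in> {v2 0 0, v2 0 1, v2 1 0, v2 1 1}"
  then show "x \<in> binary_points" unfolding binary_points_def by (auto simp: forall_2)
qed

lemma sum_bp: "(\<Sum>x\<in>(binary_points :: (real^2) set). f x) = f (v2 0 0) + f (v2 0 1) + f (v2 1 0) + f (v2 1 1)"
proof -
  have d: "v2 0 0 \<noteq> v2 0 1" "v2 0 0 \<noteq> v2 1 0" "v2 0 0 \<noteq> v2 1 1" "v2 0 1 \<noteq> v2 1 0" "v2 0 1 \<noteq> v2 1 1" "v2 1 0 \<noteq> v2 1 1"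
    by (auto simp: vec_eq_iff forall_2)
  show ?thesis unfolding binary_points_2 using d by (simp add: add.assoc)
qed

lemma prod_2: "prod f (UNIV::2 set) = f 1 * f 2"
  unfolding UNIV_2 by simp

lemma bern_2: "bern (mu::real^2) x = (if x$1 = 1 then mu$1 else 1 - mu$1) * (if x$2 = 1 then mu$2 else 1 - mu$2)"
  unfolding bern_def prod_2 by simp


definition od :: "real \<Rightarrow> real \<Rightarrow> real" where "od x y = y*(1-x)/((1-y)*x)"

lemma odds_alg:
  fixes u0 u1 w0 w1 c00 c01 c10 c11 :: real
  assumes "u0 > 0" "u1 > 0" "w0 > 0" "w1 > 0" "c01*w1 + c00*w0 > 0" "c10 + c11 > 0"
  shows "(c10*u1*w0 + c11*u1*w1)*(c00+c01) / ((c00*u0*w0 + c01*u0*w1)*(c10+c11))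
       = (u1/u0) * Gm c00 c01 c10 c11 (w1/w0)"
proof -
  have a: "c01*(w1/w0) + c00 = (c01*w1 + c00*w0)/w0" "c11*(w1/w0) + c10 = (c11*w1 + c10*w0)/w0"
    using assms by (simp_all add: field_simps)
  have b: "c00*u0*w0 + c01*u0*w1 = u0*(c01*w1 + c00*w0)" "c10*u1*w0 + c11*u1*w1 = u1*(c11*w1 + c10*w0)"
    by (simp_all add: algebra_simps)
  have dd: "\<And>X Y w::real. w \<noteq> 0 \<Longrightarrow> (X/w)/(Y/w) = X/Y"
    by (case_tac "Y = 0") (simp_all add: field_simps)
  have g: "\<And>K L. L > 0 \<Longrightarrow> u1*K*(c00+c01) / ((u0*L)*(c10+c11)) = (u1/u0) * (((c00+c01)*(K/w0))/((c10+c11)*(L/w0)))"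
  proof -
    fix K L :: real
    have "((c00+c01)*(K/w0))/((c10+c11)*(L/w0)) = (((c00+c01)*K)/w0)/(((c10+c11)*L)/w0)" by simp
    also have "\<dots> = ((c00+c01)*K)/((c10+c11)*L)" by (rule dd) (use assms in simp)
    finally have e1: "((c00+c01)*(K/w0))/((c10+c11)*(L/w0)) = ((c00+c01)*K)/((c10+c11)*L)" .
    show "u1*K*(c00+c01) / ((u0*L)*(c10+c11)) = (u1/u0) * (((c00+c01)*(K/w0))/((c10+c11)*(L/w0)))"
      unfolding e1 by (simp only: times_divide_times_eq) (simp add: ac_simps)
  qed
  show ?thesis unfolding Gm_def a b using g[OF assms(5)] by simp
qed

lemma od_frac:
  fixes N Z x :: real
  assumes "0 < N" "N < Z" "0 < x" "x < 1"
  shows "od x (N/Z) = N*(1-x) / ((Z - N)*x)"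
  unfolding od_def using assms by (simp add: field_simps)

lemma Z_alg:
  fixes a b x y s :: real
  assumes "x \<noteq> 0" "1 - x \<noteq> 0" "y \<noteq> 0" "1 - y \<noteq> 0"
  shows "((1-x)*(1-y) + s) * ((1-a)/(1-x)) * ((1-b)/(1-y)) + ((1-x)*y - s) * ((1-a)/(1-x)) * (b/y)
   + (x*(1-y) - s) * (a/x) * ((1-b)/(1-y)) + (x*y + s) * (a/x) * (b/y)
   = 1 + s*(a-x)*(b-y)/(x*(1-x)*y*(1-y))"
proof -
  have e1: "(1-a)/(1-x) * (1-x) = 1 - a" "a/x*x = a" "(1-b)/(1-y)*(1-y) = 1-b" "b/y*y = b" using assms by auto
  have e2: "a/x - (1-a)/(1-x) = (a-x)/(x*(1-x))" using assms by (simp add: field_simps)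
  have e3: "b/y - (1-b)/(1-y) = (b-y)/(y*(1-y))" using assms by (simp add: field_simps)
  have ring: "((1-x)*(1-y) + s) * A0 * B0 + ((1-x)*y - s) * A0 * B1 + (x*(1-y) - s) * A1 * B0 + (x*y + s) * A1 * B1
     = (A0 * (1-x) + A1*x) * (B0*(1-y) + B1*y) + s * (A1 - A0) * (B1 - B0)" for A0 A1 B0 B1 :: real
    by (simp add: algebra_simps)
  have "((1-x)*(1-y) + s) * ((1-a)/(1-x)) * ((1-b)/(1-y)) + ((1-x)*y - s) * ((1-a)/(1-x)) * (b/y)
   + (x*(1-y) - s) * (a/x) * ((1-b)/(1-y)) + (x*y + s) * (a/x) * (b/y)
   = ((1-a)/(1-x) * (1-x) + a/x*x) * ((1-b)/(1-y)*(1-y) + b/y*y) + s * (a/x - (1-a)/(1-x)) * (b/y - (1-b)/(1-y))"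
    by (rule ring)
  also have "\<dots> = 1 + s*(a-x)*(b-y)/(x*(1-x)*y*(1-y))" unfolding e1 e2 e3 using assms by (simp add: field_simps)
  finally show ?thesis .
qed

locale emsetup =
  fixes p1 :: real and m1 m2 :: "real^2"
  assumes p1: "0 < p1" "p1 < 1"
    and m1: "\<forall>i. 0 \<le> m1$i \<and> m1$i \<le> 1"
    and m2: "\<forall>i. 0 \<le> m2$i \<and> m2$i \<le> 1"
    and sig: "sigma12 p1 m1 m2 \<noteq> 0"
    and xb: "\<forall>i. 0 < (xbar p1 m1 m2)$i \<and> (xbar p1 m1 m2)$i < 1"
begin

definition "P a b = pstar p1 m1 m2 (v2 a b)"
abbreviation "x1 \<equiv> (xbar p1 m1 m2)$1"
abbreviation "x2 \<equiv> (xbar p1 m1 m2)$2"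
abbreviation "\<sigma> \<equiv> sigma12 p1 m1 m2"

lemma P_vals:
  "P 0 0 = p1*(1-m1$1)*(1-m1$2) + (1-p1)*(1-m2$1)*(1-m2$2)"
  "P 0 1 = p1*(1-m1$1)*(m1$2) + (1-p1)*(1-m2$1)*(m2$2)"
  "P 1 0 = p1*(m1$1)*(1-m1$2) + (1-p1)*(m2$1)*(1-m2$2)"
  "P 1 1 = p1*(m1$1)*(m1$2) + (1-p1)*(m2$1)*(m2$2)"
  unfolding P_def pstar_def bern_2 by simp_all

lemma P_nn: "P 0 0 \<ge> 0" "P 0 1 \<ge> 0" "P 1 0 \<ge> 0" "P 1 1 \<ge> 0"
  unfolding P_vals using p1 m1 m2 by (auto intro!: add_nonneg_nonneg mult_nonneg_nonneg)

lemma P_sum: "P 0 0 + P 0 1 + P 1 0 + P 1 1 = 1"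
  unfolding P_vals by (simp add: algebra_simps)

lemma xbar1: "x1 = P 1 0 + P 1 1"
  unfolding xbar_def sum_bp P_def by simp

lemma xbar2: "x2 = P 0 1 + P 1 1"
  unfolding xbar_def sum_bp P_def by simp

lemma x1b: "0 < x1" "x1 < 1" and x2b: "0 < x2" "x2 < 1"
  using xb by auto

lemma sigma_P: "\<sigma> = P 1 1 - x1 * x2"
  unfolding sigma12_def Estar_def sum_bp xbar1 xbar2 P_def[symmetric] by simp

lemma sigma_P2: "\<sigma> = P 1 1 * P 0 0 - P 1 0 * P 0 1"
proof -
  have "P 1 1 = P 1 1 * (P 0 0 + P 0 1 + P 1 0 + P 1 1)" using P_sum by simp
  then show ?thesis unfolding sigma_P xbar1 xbar2 by (simp add: algebra_simps)
qed

lemma sigma_m: "\<sigma> = p1*(1-p1)*(m1$1 - m2$1)*(m1$2 - m2$2)"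
  unfolding sigma_P xbar1 xbar2 P_vals by (simp add: algebra_simps)


lemma P_marg: "P 1 1 = x1*x2 + \<sigma>" "P 1 0 = x1*(1-x2) - \<sigma>" "P 0 1 = (1-x1)*x2 - \<sigma>"
  "P 0 0 = (1-x1)*(1-x2) + \<sigma>"
  using sigma_P xbar1 xbar2 P_sum by (simp_all add: algebra_simps)

definition "intr (mu::real^2) \<longleftrightarrow> 0 < mu$1 \<and> mu$1 < 1 \<and> 0 < mu$2 \<and> mu$2 < 1"

definition "Zf (mu::real^2) = P 0 0 * ((1-mu$1)/(1-x1)) * ((1-mu$2)/(1-x2)) + P 0 1 * ((1-mu$1)/(1-x1)) * (mu$2/x2)
   + P 1 0 * (mu$1/x1) * ((1-mu$2)/(1-x2)) + P 1 1 * (mu$1/x1) * (mu$2/x2)"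
definition "N1 (mu::real^2) = P 1 0 * (mu$1/x1) * ((1-mu$2)/(1-x2)) + P 1 1 * (mu$1/x1) * (mu$2/x2)"
definition "N2 (mu::real^2) = P 0 1 * ((1-mu$1)/(1-x1)) * (mu$2/x2) + P 1 1 * (mu$1/x1) * (mu$2/x2)"

lemma Z1_eq: "Z1 p1 m1 m2 mu = Zf mu"
  unfolding Z1_def sum_bp qtil1_def bern_2 Zf_def P_def[symmetric] using x1b x2b by simp

lemma em_eq: "em_mu1 p1 m1 m2 mu = v2 (N1 mu / Zf mu) (N2 mu / Zf mu)"
  unfolding em_mu1_def Z1_def[symmetric] Z1_eq sum_bp qtil1_def bern_2 N1_def N2_def P_def[symmetric]
  using x1b x2b by (simp add: vec_eq_iff forall_2 divide_inverse)

lemma Zf_formula: "Zf mu = 1 + \<sigma>*(mu$1-x1)*(mu$2-x2)/(x1*(1-x1)*x2*(1-x2))"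
proof -
  have a: "x1 \<noteq> 0" "1 - x1 \<noteq> 0" "x2 \<noteq> 0" "1 - x2 \<noteq> 0" using x1b x2b by auto
  show ?thesis unfolding Zf_def P_marg using Z_alg[OF a] by simp
qed


definition "N01 (mu::real^2) = P 0 0 * ((1-mu$1)/(1-x1)) * ((1-mu$2)/(1-x2)) + P 0 1 * ((1-mu$1)/(1-x1)) * (mu$2/x2)"
definition "N02 (mu::real^2) = P 0 0 * ((1-mu$1)/(1-x1)) * ((1-mu$2)/(1-x2)) + P 1 0 * (mu$1/x1) * ((1-mu$2)/(1-x2))"

lemma Z_split: "Zf mu = N1 mu + N01 mu" "Zf mu = N2 mu + N02 mu"
  unfolding Zf_def N1_def N01_def N2_def N02_def by (simp_all add: algebra_simps)

lemma pos_pair: "c0 \<ge> 0 \<Longrightarrow> c1 \<ge> 0 \<Longrightarrow> c0 + c1 > 0 \<Longrightarrow> (w0::real) > 0 \<Longrightarrow> w1 > 0 \<Longrightarrow> c0*w0 + c1*w1 > 0"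
proof -
  assume h: "c0 \<ge> 0" "c1 \<ge> 0" "c0 + c1 > 0" "w0 > 0" "w1 > 0"
  have "c0*w0 \<ge> 0" "c1*w1 \<ge> 0" using h by auto
  moreover have "c0 > 0 \<or> c1 > 0" using h by auto
  then have "c0*w0 > 0 \<or> c1*w1 > 0" using h by auto
  ultimately show ?thesis by linarith
qed

lemma r_pos: assumes "intr mu"
  shows "mu$1/x1 > 0" "(1-mu$1)/(1-x1) > 0" "mu$2/x2 > 0" "(1-mu$2)/(1-x2) > 0"
  using assms x1b x2b unfolding intr_def by auto

lemma P_mpos: "P 1 0 + P 1 1 > 0" "P 0 0 + P 0 1 > 0" "P 0 1 + P 1 1 > 0" "P 0 0 + P 1 0 > 0"
    using xbar1 xbar2 x1b x2b P_sum by auto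

lemma pos_pair2: "c0 \<ge> 0 \<Longrightarrow> c1 \<ge> 0 \<Longrightarrow> c0 + c1 > 0 \<Longrightarrow> (w0::real) > 0 \<Longrightarrow> w1 > 0 \<Longrightarrow> a > 0
   \<Longrightarrow> c0*a*w0 + c1*a*w1 > 0 \<and> c0*w0*a + c1*w1*a > 0"
  using pos_pair[of c0 c1 w0 w1] by (simp add: mult.commute mult.left_commute distrib_left[symmetric])

lemma N_pos: assumes "intr mu" shows "N1 mu > 0" "N01 mu > 0" "N2 mu > 0" "N02 mu > 0"
proof -
  note r = r_pos[OF assms]
  have s1: "P 1 0 + P 1 1 > 0" "P 0 0 + P 0 1 > 0" "P 0 1 + P 1 1 > 0" "P 0 0 + P 1 0 > 0"
    using xbar1 xbar2 x1b x2b P_sum by auto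
  show "N1 mu > 0" unfolding N1_def using pos_pair2[OF P_nn(3) P_nn(4) s1(1) r(4) r(3) r(1)] by simp
  show "N01 mu > 0" unfolding N01_def using pos_pair2[OF P_nn(1) P_nn(2) s1(2) r(4) r(3) r(2)] by simp
  show "N2 mu > 0" unfolding N2_def using pos_pair2[OF P_nn(2) P_nn(4) s1(3) r(2) r(1) r(3)] by simp
  show "N02 mu > 0" unfolding N02_def using pos_pair2[OF P_nn(1) P_nn(3) s1(4) r(2) r(1) r(4)] by simp
qed

abbreviation "F \<equiv> em_mu1 p1 m1 m2"

lemma Zf_pos: "intr mu \<Longrightarrow> Zf mu > 0"
  using N_pos[of mu] Z_split[of mu] by linarith

lemma F_intr: assumes "intr mu" shows "intr (F mu)"
proof -
  note n = N_pos[OF assms] and z = Z_split[of mu]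
  have "0 < N1 mu / Zf mu" "N1 mu / Zf mu < 1" "0 < N2 mu / Zf mu" "N2 mu / Zf mu < 1"
    using n z by (simp_all add: divide_less_eq)
  then show ?thesis unfolding em_eq intr_def by simp
qed

definition "A (mu::real^2) = od x1 (mu$1)"
definition "B (mu::real^2) = od x2 (mu$2)"

lemma A_step: assumes "intr mu" shows "A (F mu) = A mu * Gm (P 0 0) (P 0 1) (P 1 0) (P 1 1) (B mu)"
proof -
  note n = N_pos[OF assms] and z = Z_split[of mu] and r = r_pos[OF assms]
  have "A (F mu) = N1 mu * (1-x1) / ((Zf mu - N1 mu) * x1)"
    unfolding A_def em_eq using od_frac[of "N1 mu" "Zf mu" x1] n z x1b by simp
  also have "\<dots> = N1 mu * (P 0 0 + P 0 1) / (N01 mu * (P 1 0 + P 1 1))"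
  proof -
    have "Zf mu - N1 mu = N01 mu" "1 - x1 = P 0 0 + P 0 1" "x1 = P 1 0 + P 1 1"
      using z xbar1 P_sum by simp_all
    then show ?thesis by simp
  qed
  also have "\<dots> = ((mu$1/x1)/((1-mu$1)/(1-x1))) * Gm (P 0 0) (P 0 1) (P 1 0) (P 1 1) ((mu$2/x2)/((1-mu$2)/(1-x2)))"
    unfolding N1_def N01_def
  proof (rule odds_alg)
    show "0 < P 0 1 * (mu$2/x2) + P 0 0 * ((1-mu$2)/(1-x2))"
      by (rule pos_pair[OF P_nn(2) P_nn(1) _ r(3) r(4)]) (use P_mpos in simp)
  qed (use r P_mpos in auto)
  also have "(mu$1/x1)/((1-mu$1)/(1-x1)) = A mu" unfolding A_def od_def by (simp add: field_simps)
  also have "(mu$2/x2)/((1-mu$2)/(1-x2)) = B mu" unfolding B_def od_def by (simp add: field_simps)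
  finally show ?thesis .
qed

lemma B_step: assumes "intr mu" shows "B (F mu) = B mu * Gm (P 0 0) (P 1 0) (P 0 1) (P 1 1) (A mu)"
proof -
  note n = N_pos[OF assms] and z = Z_split[of mu] and r = r_pos[OF assms]
  have "B (F mu) = N2 mu * (1-x2) / ((Zf mu - N2 mu) * x2)"
    unfolding B_def em_eq using od_frac[of "N2 mu" "Zf mu" x2] n z x2b by simp
  also have "\<dots> = N2 mu * (P 0 0 + P 1 0) / (N02 mu * (P 0 1 + P 1 1))"
  proof -
    have "Zf mu - N2 mu = N02 mu" "1 - x2 = P 0 0 + P 1 0" "x2 = P 0 1 + P 1 1"
      using z xbar2 P_sum by simp_all
    then show ?thesis by simp
  qed
  also have "N2 mu = P 0 1 * (mu$2/x2) * ((1-mu$1)/(1-x1)) + P 1 1 * (mu$2/x2) * (mu$1/x1)"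
    unfolding N2_def by (simp add: ac_simps)
  also have "N02 mu = P 0 0 * ((1-mu$2)/(1-x2)) * ((1-mu$1)/(1-x1)) + P 1 0 * ((1-mu$2)/(1-x2)) * (mu$1/x1)"
    unfolding N02_def by (simp add: ac_simps)
  also have "(P 0 1 * (mu$2/x2) * ((1-mu$1)/(1-x1)) + P 1 1 * (mu$2/x2) * (mu$1/x1)) * (P 0 0 + P 1 0) /
     ((P 0 0 * ((1-mu$2)/(1-x2)) * ((1-mu$1)/(1-x1)) + P 1 0 * ((1-mu$2)/(1-x2)) * (mu$1/x1)) * (P 0 1 + P 1 1))
     = ((mu$2/x2)/((1-mu$2)/(1-x2))) * Gm (P 0 0) (P 1 0) (P 0 1) (P 1 1) ((mu$1/x1)/((1-mu$1)/(1-x1)))"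
  proof (rule odds_alg)
    show "0 < P 1 0 * (mu$1/x1) + P 0 0 * ((1-mu$1)/(1-x1))"
      by (rule pos_pair[OF P_nn(3) P_nn(1) _ r(1) r(2)]) (use P_mpos in simp)
  qed (use r P_mpos in auto)
  also have "(mu$1/x1)/((1-mu$1)/(1-x1)) = A mu" unfolding A_def od_def by (simp add: field_simps)
  also have "(mu$2/x2)/((1-mu$2)/(1-x2)) = B mu" unfolding B_def od_def by (simp add: field_simps)
  finally show ?thesis .
qed

end

lemma prodlim:
  fixes Z :: "nat \<Rightarrow> real"
  assumes pos: "\<And>s. Z s > 0" and ge: "\<And>s. s \<ge> T \<Longrightarrow> Z s \<ge> z" and z: "z > 1"
  shows "filterlim (\<lambda>t. \<Prod>s<t. Z s) at_top sequentially"
proof -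
  define c0 where "c0 = (\<Prod>s<T. Z s)"
  have c0: "c0 > 0" unfolding c0_def using pos by (simp add: prod_pos)
  have lin: "(\<Prod>s<T+n. Z s) \<ge> c0 * (1 + real n * (z-1))" for n
  proof (induction n)
    case 0 then show ?case unfolding c0_def by simp
  next
    case (Suc n)
    have "(\<Prod>s<T+Suc n. Z s) = (\<Prod>s<T+n. Z s) * Z (T+n)" by simp
    also have "\<dots> \<ge> c0 * (1 + real n * (z-1)) * z"
    proof (rule mult_mono)
      show "z \<le> Z (T+n)" using ge by simp
      show "0 \<le> (\<Prod>s<T+n. Z s)" using pos by (simp add: prod_nonneg less_imp_le)
    qed (use Suc z in auto)
    moreover have "c0 * (1 + real n * (z-1)) * z \<ge> c0 * (1 + real (Suc n) * (z-1))"
    proof -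
      have "c0 * 1 \<le> c0 * (1 + real n * (z-1))" using c0 z by (intro mult_left_mono) auto
      then have "c0 * (1 + real n * (z-1)) * (z - 1) \<ge> c0 * 1 * (z-1)"
        using z by (intro mult_right_mono) auto
      then show ?thesis by (simp add: algebra_simps)
    qed
    ultimately show ?case by linarith
  qed
  show ?thesis unfolding filterlim_at_top
  proof
    fix M :: real
    obtain n :: nat where n: "real n > M / (c0 * (z-1))" using reals_Archimedean2 by blast
    have cz: "c0 * (z-1) > 0" using c0 z by simp
    have Mn: "M \<le> c0 * (1 + real n * (z-1))"
    proof -
      have "M < real n * (c0 * (z-1))" using n cz by (simp add: divide_less_eq)
      then show ?thesis using c0 by (simp add: algebra_simps)
    qed
    show "\<forall>\<^sub>F t in sequentially. M \<le> (\<Prod>s<t. Z s)"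
      unfolding eventually_sequentially
    proof (intro exI[of _ "T+n"] allI impI)
      fix t assume t: "T + n \<le> t"
      define m where "m = t - T"
      have m: "t = T + m" "m \<ge> n" using t unfolding m_def by auto
      have "real n * (z-1) \<le> real m * (z-1)" using m z by (intro mult_right_mono) auto
      then have "c0 * (1 + real n * (z-1)) \<le> c0 * (1 + real m * (z-1))"
        using c0 by (intro mult_left_mono) auto
      then show "M \<le> (\<Prod>s<t. Z s)" unfolding m(1) using lin[of m] Mn by linarith
    qed
  qed
qed

lemma od_eq: "od x y = (y/(1-y)) * ((1-x)/x)" unfolding od_def by simp

lemma frac_less: "0 < y \<Longrightarrow> y < 1 \<Longrightarrow> 0 < y' \<Longrightarrow> y' < 1 \<Longrightarrow> y/(1-y) < y'/(1-y') \<longleftrightarrow> y < (y'::real)"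
proof -
  assume h: "0 < y" "y < 1" "0 < y'" "y' < 1"
  have e: "z/(1-z) = inverse (1-z) - 1" if "z < 1" for z :: real
    using that by (simp add: field_simps)
  have "inverse (1-y) < inverse (1-y') \<longleftrightarrow> 1 - y' < 1 - y"
    using h by (intro inverse_less_iff_less) auto
  then show ?thesis using e[OF h(2)] e[OF h(4)] by simp
qed

lemma od_less: assumes "0 < x" "x < 1" "0 < y" "y < 1" "0 < y'" "y' < 1"
  shows "od x y < od x y' \<longleftrightarrow> y < y'"
proof -
  have c: "(1-x)/x > 0" using assms by simp
  show ?thesis unfolding od_eq
    by (subst mult_less_cancel_right_pos[OF c]) (rule frac_less; use assms in simp)
qed

lemma od_le: assumes "0 < x" "x < 1" "0 < y" "y < 1" "0 < y'" "y' < 1"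
  shows "od x y \<le> od x y' \<longleftrightarrow> y \<le> y'"
  using od_less[OF assms(1,2,5,6,3,4)] by (simp add: not_less[symmetric])

lemma od_self: "0 < x \<Longrightarrow> x < 1 \<Longrightarrow> od x x = 1" unfolding od_def by simp

lemma od_pos: "0 < x \<Longrightarrow> x < 1 \<Longrightarrow> 0 < y \<Longrightarrow> y < 1 \<Longrightarrow> od x y > 0" unfolding od_def by simp

lemma od_recip: "1 / od x y = od (1-x) (1-y)" unfolding od_def by simp

lemma Gm_recip: "1 / Gm c00 c01 c10 c11 y = Gm c10 c11 c00 c01 y" unfolding Gm_def by simp

lemma Gm_inv: assumes "y > 0" shows "Gm c00 c01 c10 c11 y = Gm c01 c00 c11 c10 (1/y)"
proof -
  have a: "c11*y + c10 = (c10*(1/y) + c11) * y" "c01*y + c00 = (c00*(1/y) + c01) * y"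
    using assms by (simp_all add: algebra_simps)
  have "Gm c00 c01 c10 c11 y = ((c00+c01)*((c10*(1/y) + c11) * y)) / ((c10+c11)*((c00*(1/y) + c01) * y))"
    unfolding Gm_def a by simp
  also have "\<dots> = (((c00+c01)*(c10*(1/y) + c11)) * y) / (((c10+c11)*(c00*(1/y) + c01)) * y)"
    by (simp add: ac_simps)
  also have "\<dots> = ((c00+c01)*(c10*(1/y) + c11)) / ((c10+c11)*(c00*(1/y) + c01))"
    using assms by (rule mult_divide_mult_cancel_right[OF less_imp_neq[symmetric]])
  also have "\<dots> = Gm c01 c00 c11 c10 (1/y)" unfolding Gm_def by (simp add: ac_simps)
  finally show ?thesis .
qed

lemma od_gt1: "0 < x \<Longrightarrow> x < 1 \<Longrightarrow> 0 < y \<Longrightarrow> y < 1 \<Longrightarrow> 1 < od x y \<longleftrightarrow> x < y"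
  using od_less[of x x y] od_self[of x] by simp
lemma od_lt1: "0 < x \<Longrightarrow> x < 1 \<Longrightarrow> 0 < y \<Longrightarrow> y < 1 \<Longrightarrow> od x y < 1 \<longleftrightarrow> y < x"
  using od_less[of x y x] od_self[of x] by simp
lemma two_cancel: "2 / S * (a / 2) * b = a * b / (S::real)"
  by (cases "S = 0") (simp_all add: field_simps)

lemma prod_further:
  fixes u v u2 v2 :: real
  assumes "(0 < u \<and> u \<le> u2 \<and> 0 < v \<and> v \<le> v2) \<or> (u2 \<le> u \<and> u < 0 \<and> v2 \<le> v \<and> v < 0)"
  shows "u * v \<le> u2 * v2 \<and> 0 < u * v"
  using assms
proof
  assume h: "0 < u \<and> u \<le> u2 \<and> 0 < v \<and> v \<le> v2"
  have "u * v \<le> u2 * v2" by (rule mult_mono) (use h in linarith)+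
  moreover have "0 < u * v" using h by simp
  ultimately show ?thesis by simp
next
  assume h: "u2 \<le> u \<and> u < 0 \<and> v2 \<le> v \<and> v < 0"
  have "(-u)*(-v) \<le> (-u2)*(-v2)" by (rule mult_mono) (use h in linarith)+
  then show ?thesis using h by (simp add: mult_neg_neg)
qed


context emsetup
begin

definition "ee = (if \<sigma> > 0 then 1 else (-1::real))"
definition "Bh (mu::real^2) = (if \<sigma> > 0 then od x2 (mu$2) else od (1-x2) (1-mu$2))"
definition "D1 (mu::real^2) = mu$1 - x1"
definition "D2 (mu::real^2) = ee * (mu$2 - x2)"
definition "G1h = (if \<sigma> > 0 then Gm (P 0 0) (P 0 1) (P 1 0) (P 1 1) else Gm (P 0 1) (P 0 0) (P 1 1) (P 1 0))"
definition "G2h = (if \<sigma> > 0 then Gm (P 0 0) (P 1 0) (P 0 1) (P 1 1) else Gm (P 0 1) (P 1 1) (P 0 0) (P 1 0))"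

lemma ee_cases: "(\<sigma> > 0 \<and> ee = 1) \<or> (\<sigma> < 0 \<and> ee = -1)"
  unfolding ee_def using sig by auto

lemma sig_ee: "\<sigma> * ee = \<bar>\<sigma>\<bar>" "ee * ee = 1"
  using ee_cases by auto

lemma tab_case: "tab (P 0 0) (P 0 1) (P 1 0) (P 1 1) \<or> \<sigma> < 0"
  "\<sigma> < 0 \<Longrightarrow> tab (P 0 1) (P 0 0) (P 1 1) (P 1 0)"
proof -
  show "tab (P 0 0) (P 0 1) (P 1 0) (P 1 1) \<or> \<sigma> < 0"
  proof (cases "\<sigma> < 0")
    case False
    then have "\<sigma> > 0" using sig by simp
    then show ?thesis unfolding tab_def using P_nn sigma_P2 by simp
  qed simp
  show "\<sigma> < 0 \<Longrightarrow> tab (P 0 1) (P 0 0) (P 1 1) (P 1 0)"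
    unfolding tab_def using P_nn sigma_P2 by (simp add: mult.commute)
qed

lemma G_props: "\<exists>k1 k2. gprops G1h k1 \<and> gprops G2h k2"
proof (cases "\<sigma> > 0")
  case True
  then have t: "tab (P 0 0) (P 0 1) (P 1 0) (P 1 1)" using tab_case(1) by auto
  show ?thesis unfolding G1h_def G2h_def using True tab_gprops[OF t] tab_gprops[OF tab_transp[OF t]] by auto
next
  case False
  then have "\<sigma> < 0" using sig by simp
  then have t: "tab (P 0 1) (P 0 0) (P 1 1) (P 1 0)" using tab_case(2) by auto
  show ?thesis unfolding G1h_def G2h_def using False tab_gprops[OF t] tab_gprops[OF tab_transp[OF t]] by auto
qed

lemma A_pos: "intr mu \<Longrightarrow> A mu > 0" unfolding A_def intr_def using od_pos x1b by simp
lemma Bh_pos: "intr mu \<Longrightarrow> Bh mu > 0" unfolding Bh_def intr_def using od_pos x2b by simp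

lemma B_pos: "intr mu \<Longrightarrow> B mu > 0" unfolding B_def intr_def using od_pos x2b by simp

lemma Bh_alt: "Bh mu = (if \<sigma> > 0 then B mu else 1 / B mu)"
  unfolding Bh_def B_def using od_recip by simp

lemma A_stepH: assumes "intr mu" shows "A (F mu) = A mu * G1h (Bh mu)"
proof (cases "\<sigma> > 0")
  case True then show ?thesis using A_step[OF assms] unfolding G1h_def Bh_alt by simp
next
  case False
  have "Gm (P 0 0) (P 0 1) (P 1 0) (P 1 1) (B mu) = Gm (P 0 1) (P 0 0) (P 1 1) (P 1 0) (1 / B mu)"
    using B_pos[OF assms] by (rule Gm_inv)
  then show ?thesis using A_step[OF assms] False unfolding G1h_def Bh_alt by simp
qed

lemma Bh_stepH: assumes "intr mu" shows "Bh (F mu) = Bh mu * G2h (A mu)"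
proof (cases "\<sigma> > 0")
  case True then show ?thesis using B_step[OF assms] unfolding G2h_def Bh_alt by simp
next
  case False
  have "1 / B (F mu) = (1 / B mu) * (1 / Gm (P 0 0) (P 1 0) (P 0 1) (P 1 1) (A mu))"
    using B_step[OF assms] by simp
  also have "1 / Gm (P 0 0) (P 1 0) (P 0 1) (P 1 1) (A mu) = Gm (P 0 1) (P 1 1) (P 0 0) (P 1 0) (A mu)"
    by (rule Gm_recip)
  finally show ?thesis using False unfolding G2h_def Bh_alt by simp
qed

lemma A_less: "intr mu \<Longrightarrow> intr mu' \<Longrightarrow> A mu < A mu' \<longleftrightarrow> D1 mu < D1 mu'"
  unfolding A_def D1_def intr_def using od_less x1b by simp

lemma A_le: "intr mu \<Longrightarrow> intr mu' \<Longrightarrow> A mu \<le> A mu' \<longleftrightarrow> D1 mu \<le> D1 mu'"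
  unfolding A_def D1_def intr_def using od_le x1b by simp

lemma A_gt1: "intr mu \<Longrightarrow> 1 < A mu \<longleftrightarrow> 0 < D1 mu"
  unfolding A_def D1_def intr_def using od_less[of x1 x1 "mu$1"] od_self[of x1] x1b by simp

lemma A_lt1: "intr mu \<Longrightarrow> A mu < 1 \<longleftrightarrow> D1 mu < 0"
  unfolding A_def D1_def intr_def using od_less[of x1 "mu$1" x1] od_self[of x1] x1b by simp

lemma Bh_less: "intr mu \<Longrightarrow> intr mu' \<Longrightarrow> Bh mu < Bh mu' \<longleftrightarrow> D2 mu < D2 mu'"
  unfolding Bh_def D2_def intr_def ee_def using od_less x2b
  by (auto simp: od_less[of x2] od_less[of "1-x2"])

lemma Bh_le: "intr mu \<Longrightarrow> intr mu' \<Longrightarrow> Bh mu \<le> Bh mu' \<longleftrightarrow> D2 mu \<le> D2 mu'"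
  using Bh_less[of mu' mu] by (simp add: not_less[symmetric])

lemma Bh_gt1: assumes "intr mu" shows "1 < Bh mu \<longleftrightarrow> 0 < D2 mu"
proof -
  have m: "0 < mu$2" "mu$2 < 1" using assms unfolding intr_def by auto
  show ?thesis
  proof (cases "\<sigma> > 0")
    case True then show ?thesis unfolding Bh_def D2_def ee_def using od_gt1[of x2 "mu$2"] x2b m by simp
  next
    case False then show ?thesis unfolding Bh_def D2_def ee_def using od_gt1[of "1-x2" "1-mu$2"] x2b m by auto
  qed
qed

lemma Bh_lt1: assumes "intr mu" shows "Bh mu < 1 \<longleftrightarrow> D2 mu < 0"
proof -
  have m: "0 < mu$2" "mu$2 < 1" using assms unfolding intr_def by auto
  show ?thesis
  proof (cases "\<sigma> > 0")
    case True then show ?thesis unfolding Bh_def D2_def ee_def using od_lt1[of x2 "mu$2"] x2b m by simp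
  next
    case False then show ?thesis unfolding Bh_def D2_def ee_def using od_lt1[of "1-x2" "1-mu$2"] x2b m by auto
  qed
qed

lemma Zf_D: "Zf mu = 1 + \<bar>\<sigma>\<bar> * (D1 mu * D2 mu) / (x1*(1-x1)*x2*(1-x2))"
proof -
  have "\<sigma>*(mu$1-x1)*(mu$2-x2) = (\<sigma>*ee) * (D1 mu * (ee*(mu$2 - x2)))"
    unfolding D1_def using ee_cases by auto
  then show ?thesis unfolding Zf_formula sig_ee(1) D2_def[symmetric] by simp
qed

lemma lam_pos: assumes "D1 mu * D2 mu > 0" shows "lam p1 m1 m2 mu \<in> pos_regions"
proof -
  let ?l = "lam p1 m1 m2 mu"
  have l1: "?l$1 = (m1$1 - m2$1) * D1 mu / (x1*(1-x1))" unfolding lam_def D1_def by (simp only: vec_lambda_beta two_cancel)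
  have l2: "?l$2 = (m1$2 - m2$2) * (mu$2 - x2) / (x2*(1-x2))" unfolding lam_def by (simp only: vec_lambda_beta two_cancel)
  have "?l$1 * ?l$2 = ((m1$1 - m2$1) * (m1$2 - m2$2)) * (D1 mu * (mu$2 - x2)) / ((x1*(1-x1))*(x2*(1-x2)))"
    unfolding l1 l2 by simp
  also have "(m1$1 - m2$1) * (m1$2 - m2$2) = \<sigma> / (p1*(1-p1))" unfolding sigma_m using p1 by simp
  also have "\<sigma> / (p1*(1-p1)) * (D1 mu * (mu$2 - x2)) = \<bar>\<sigma>\<bar> * (D1 mu * D2 mu) / (p1*(1-p1))"
  proof -
    have "\<sigma> * (D1 mu * (mu$2 - x2)) = (\<sigma>*ee) * (D1 mu * (ee*(mu$2 - x2)))"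
      using ee_cases by auto
    then show ?thesis unfolding sig_ee(1) D2_def[symmetric] by simp
  qed
  finally have "?l$1 * ?l$2 > 0" using assms sig p1 x1b x2b by simp
  then have "(?l$1 > 0 \<and> ?l$2 > 0) \<or> (?l$1 < 0 \<and> ?l$2 < 0)" by (simp add: zero_less_mult_iff)
  then show ?thesis unfolding pos_regions_def by (auto simp: forall_2)
qed

end

context emsetup
begin

definition "orb mu0 t = (F ^^ t) mu0"

lemma orb_Suc: "orb mu0 (Suc t) = F (orb mu0 t)" unfolding orb_def by simp

lemma orb_intr: "intr mu0 \<Longrightarrow> intr (orb mu0 t)"
  by (induction t) (auto simp: orb_def F_intr)

definition "bad mu0 \<longleftrightarrow> (\<forall>t. (A (orb mu0 t) - 1) * (Bh (orb mu0 t) - 1) \<le> 0)"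

lemma recs: assumes "intr mu0"
  shows "A (orb mu0 (Suc t)) = A (orb mu0 t) * G1h (Bh (orb mu0 t))"
    "Bh (orb mu0 (Suc t)) = Bh (orb mu0 t) * G2h (A (orb mu0 t))"
  unfolding orb_Suc using A_stepH[OF orb_intr[OF assms]] Bh_stepH[OF orb_intr[OF assms]] by auto

lemma DD_mono: assumes "intr mu0" "(A (orb mu0 T) - 1) * (Bh (orb mu0 T) - 1) > 0"
  shows "D1 (orb mu0 T) * D2 (orb mu0 T) \<le> D1 (orb mu0 (T+n)) * D2 (orb mu0 (T+n))
     \<and> 0 < D1 (orb mu0 T) * D2 (orb mu0 T)"
proof -
  obtain k1 k2 where g: "gprops G1h k1" "gprops G2h k2" using G_props by blast
  let ?a = "\<lambda>t. A (orb mu0 t)" and ?b = "\<lambda>t. Bh (orb mu0 t)"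
  have i1: "intr (orb mu0 T)" and i2: "intr (orb mu0 (T+n))" using orb_intr[OF assms(1)] by auto
  have gi: "(1 < ?a T \<and> 1 < ?b T \<and> ?a T \<le> ?a (T+n) \<and> ?b T \<le> ?b (T+n)) \<or>
         (?a T < 1 \<and> ?b T < 1 \<and> 0 < ?a (T+n) \<and> ?a (T+n) \<le> ?a T \<and> 0 < ?b (T+n) \<and> ?b (T+n) \<le> ?b T)"
    by (rule goodI[OF g, of ?a ?b T n]) (use recs[OF assms(1)] A_pos[OF i1] Bh_pos[OF i1] assms(2) in auto)
  show ?thesis
  proof (rule prod_further)
    show "(0 < D1 (orb mu0 T) \<and> D1 (orb mu0 T) \<le> D1 (orb mu0 (T+n)) \<and> 0 < D2 (orb mu0 T) \<and> D2 (orb mu0 T) \<le> D2 (orb mu0 (T+n)))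
      \<or> (D1 (orb mu0 (T+n)) \<le> D1 (orb mu0 T) \<and> D1 (orb mu0 T) < 0 \<and> D2 (orb mu0 (T+n)) \<le> D2 (orb mu0 T) \<and> D2 (orb mu0 T) < 0)"
      using gi A_gt1[OF i1] Bh_gt1[OF i1] A_lt1[OF i1] Bh_lt1[OF i1] A_le[OF i1 i2] A_le[OF i2 i1]
        Bh_le[OF i1 i2] Bh_le[OF i2 i1] by auto
  qed
qed

lemma good_case: assumes "intr mu0" "\<not> bad mu0"
  shows "(\<exists>C r. 0 < r \<and> r < 1 \<and>
              (\<forall>t. infdist (lam p1 m1 m2 ((F ^^ t) mu0)) pos_regions \<le> C * r ^ t))
         \<and> filterlim (\<lambda>t. \<Prod>s<t. Z1 p1 m1 m2 ((F ^^ s) mu0)) at_top sequentially"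
proof -
  obtain T where T: "(A (orb mu0 T) - 1) * (Bh (orb mu0 T) - 1) > 0" using assms(2) unfolding bad_def by (auto simp: not_le)
  have dd: "D1 (orb mu0 T) * D2 (orb mu0 T) \<le> D1 (orb mu0 t) * D2 (orb mu0 t)
     \<and> 0 < D1 (orb mu0 T) * D2 (orb mu0 T)" if "t \<ge> T" for t
    using DD_mono[OF assms(1) T, of "t - T"] that by simp
  let ?d = "\<lambda>t. infdist (lam p1 m1 m2 ((F ^^ t) mu0)) pos_regions"
  have zero: "?d t = 0" if "t \<ge> T" for t
  proof -
    have "lam p1 m1 m2 (orb mu0 t) \<in> pos_regions" using dd[OF that] by (intro lam_pos) linarith
    then show ?thesis unfolding orb_def by simp
  qed
  define C where "C = (\<Sum>t<T. ?d t * 2^t)"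
  have part1: "\<forall>t. ?d t \<le> C * (1/2) ^ t"
  proof
    fix t
    show "?d t \<le> C * (1/2) ^ t"
    proof (cases "t < T")
      case True
      have "?d t * 2^t \<le> C" unfolding C_def
        by (rule member_le_sum) (use True in \<open>auto intro!: mult_nonneg_nonneg infdist_nonneg\<close>)
      then have "?d t \<le> C / 2^t" by (simp add: le_divide_eq)
      then show ?thesis by (simp add: power_one_over)
    next
      case False
      have "C \<ge> 0" unfolding C_def by (intro sum_nonneg) (simp add: infdist_nonneg)
      then show ?thesis using zero[of t] False by simp
    qed
  qed
  let ?S = "x1*(1-x1)*x2*(1-x2)"
  have S: "?S > 0" using x1b x2b by simp
  have part2: "filterlim (\<lambda>t. \<Prod>s<t. Z1 p1 m1 m2 ((F ^^ s) mu0)) at_top sequentially"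
  proof (rule prodlim)
    show "\<And>s. Z1 p1 m1 m2 ((F ^^ s) mu0) > 0"
      unfolding Z1_eq orb_def[symmetric] using Zf_pos orb_intr[OF assms(1)] by blast
    show "\<And>s. s \<ge> T \<Longrightarrow> Z1 p1 m1 m2 ((F ^^ s) mu0) \<ge> Zf (orb mu0 T)"
    proof -
      fix s assume s: "s \<ge> T"
      have "\<bar>\<sigma>\<bar> * (D1 (orb mu0 T) * D2 (orb mu0 T)) \<le> \<bar>\<sigma>\<bar> * (D1 (orb mu0 s) * D2 (orb mu0 s))"
        using dd[OF s] by (intro mult_left_mono) auto
      then have "\<bar>\<sigma>\<bar> * (D1 (orb mu0 T) * D2 (orb mu0 T)) / ?S \<le> \<bar>\<sigma>\<bar> * (D1 (orb mu0 s) * D2 (orb mu0 s)) / ?S"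
        using S by (intro divide_right_mono) auto
      then show "Z1 p1 m1 m2 ((F ^^ s) mu0) \<ge> Zf (orb mu0 T)"
        unfolding Z1_eq orb_def[symmetric] Zf_D by simp
    qed
    have "\<bar>\<sigma>\<bar> * (D1 (orb mu0 T) * D2 (orb mu0 T)) / ?S > 0" using dd[of T] sig S by simp
    then show "Zf (orb mu0 T) > 1" unfolding Zf_D by simp
  qed
  show ?thesis using part1 part2 by (intro conjI exI[of _ C] exI[of _ "1/2::real"]) auto
qed


lemma anti_dir: assumes i: "intr mu" "intr mu'" and b: "bad mu" "bad mu'"
  and le: "D1 mu \<le> D1 mu'" "D2 mu \<le> D2 mu'" and ne: "mu \<noteq> mu'"
  shows False
proof -
  obtain k1 k2 where g: "gprops G1h k1" "gprops G2h k2" using G_props by blast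
  have ne2: "mu$1 \<noteq> mu'$1 \<or> mu$2 \<noteq> mu'$2" using ne vec2_eq[of mu] vec2_eq[of mu'] by metis
  have "D1 mu \<noteq> D1 mu' \<or> D2 mu \<noteq> D2 mu'" using ne2 ee_cases unfolding D1_def D2_def by auto
  then have ne3: "A mu \<noteq> A mu' \<or> Bh mu \<noteq> Bh mu'"
    using A_le[OF i] A_le[OF i(2) i(1)] Bh_le[OF i] Bh_le[OF i(2) i(1)] by force
  show False
  proof (rule anti[OF g, of "\<lambda>t. A (orb mu t)" "\<lambda>t. Bh (orb mu t)" "\<lambda>t. A (orb mu' t)" "\<lambda>t. Bh (orb mu' t)"])
    show "\<And>t. A (orb mu (Suc t)) = A (orb mu t) * G1h (Bh (orb mu t))" by (rule recs[OF i(1)])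
    show "\<And>t. Bh (orb mu (Suc t)) = Bh (orb mu t) * G2h (A (orb mu t))" by (rule recs[OF i(1)])
    show "\<And>t. A (orb mu' (Suc t)) = A (orb mu' t) * G1h (Bh (orb mu' t))" by (rule recs[OF i(2)])
    show "\<And>t. Bh (orb mu' (Suc t)) = Bh (orb mu' t) * G2h (A (orb mu' t))" by (rule recs[OF i(2)])
    show "0 < A (orb mu 0)" "0 < Bh (orb mu 0)" using A_pos[OF i(1)] Bh_pos[OF i(1)] by (simp_all add: orb_def)
    show "A (orb mu 0) \<le> A (orb mu' 0)" "Bh (orb mu 0) \<le> Bh (orb mu' 0)"
      using A_le[OF i] Bh_le[OF i] le by (simp_all add: orb_def)
    show "A (orb mu 0) \<noteq> A (orb mu' 0) \<or> Bh (orb mu 0) \<noteq> Bh (orb mu' 0)" using ne3 by (simp add: orb_def)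
    show "\<And>t. (A (orb mu t) - 1) * (Bh (orb mu t) - 1) \<le> 0" using b(1) unfolding bad_def by blast
    show "\<And>t. (A (orb mu' t) - 1) * (Bh (orb mu' t) - 1) \<le> 0" using b(2) unfolding bad_def by blast
  qed
qed

lemma anti_bad: assumes "intr mu" "intr mu'" "bad mu" "bad mu'" "mu \<noteq> mu'"
  shows "ee * (mu$1 - mu'$1) * (mu$2 - mu'$2) < 0"
proof (rule ccontr)
  assume "\<not> ee * (mu$1 - mu'$1) * (mu$2 - mu'$2) < 0"
  then have "(D1 mu' - D1 mu) * (D2 mu' - D2 mu) \<ge> 0"
    unfolding D1_def D2_def by (simp add: algebra_simps not_less)
  then have "(0 \<le> D1 mu' - D1 mu \<and> 0 \<le> D2 mu' - D2 mu) \<or> (D1 mu' - D1 mu \<le> 0 \<and> D2 mu' - D2 mu \<le> 0)"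
    by (simp add: zero_le_mult_iff)
  then show False
  proof
    assume "0 \<le> D1 mu' - D1 mu \<and> 0 \<le> D2 mu' - D2 mu"
    then show False using anti_dir[OF assms(1-4)] assms(5) by simp
  next
    assume "D1 mu' - D1 mu \<le> 0 \<and> D2 mu' - D2 mu \<le> 0"
    then show False using anti_dir[OF assms(2) assms(1) assms(4) assms(3)] assms(5) by simp
  qed
qed

lemma hyper_negl: "negligible {x::real^2. x$k = c}"
proof -
  have "{x::real^2. x$k = c} = {x. x \<bullet> axis k 1 = c}" by (simp add: cart_eq_inner_axis)
  moreover have "axis k (1::real) \<in> Basis" by simp
  ultimately show ?thesis using negligible_standard_hyperplane by metis
qed

lemma main_AE:
  "AE mu0 in uniform_measure lborel {mu::real^2. \<forall>i. 0 \<le> mu$i \<and> mu$i \<le> 1}.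
           (\<exists>C r. 0 < r \<and> r < 1 \<and>
              (\<forall>t. infdist (lam p1 m1 m2 ((F ^^ t) mu0)) pos_regions \<le> C * r ^ t))
         \<and> filterlim (\<lambda>t. \<Prod>s<t. Z1 p1 m1 m2 ((F ^^ s) mu0)) at_top sequentially"
  (is "AE mu0 in uniform_measure lborel ?Box. ?Good mu0")
proof -
  define Bad where "Bad = {mu. intr mu \<and> bad mu}"
  define H where "H = {x::real^2. x$1 = 0} \<union> {x. x$1 = 1} \<union> {x. x$2 = 0} \<union> {x. x$2 = 1}"
  have nB: "negligible Bad"
  proof (rule negl_anti[of ee])
    show "ee = 1 \<or> ee = -1" using ee_cases by auto
    show "\<And>x y. x \<in> Bad \<Longrightarrow> y \<in> Bad \<Longrightarrow> x \<noteq> y \<Longrightarrow> ee * (x$1 - y$1) * (x$2 - y$2) < 0"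
      unfolding Bad_def using anti_bad by blast
  qed
  have nH: "negligible H" unfolding H_def by (intro negligible_Un hyper_negl)
  have nN: "Bad \<union> H \<in> null_sets lebesgue" using nB nH negligible_Un negligible_iff_null_sets by blast
  have sub: "{x \<in> space lebesgue. \<not> (x \<in> ?Box \<longrightarrow> ?Good x)} \<subseteq> Bad \<union> H"
  proof
    fix x assume x: "x \<in> {x \<in> space lebesgue. \<not> (x \<in> ?Box \<longrightarrow> ?Good x)}"
    then have box: "x \<in> ?Box" and ng: "\<not> ?Good x" by auto
    show "x \<in> Bad \<union> H"
    proof (cases "intr x")
      case True
      then have "bad x" using good_case[OF True] ng by blast
      then show ?thesis unfolding Bad_def using True by simp
    next
      case False
      then have "x$1 = 0 \<or> x$1 = 1 \<or> x$2 = 0 \<or> x$2 = 1" using box unfolding intr_def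
        by (auto simp: less_le)
      then show ?thesis unfolding H_def by auto
    qed
  qed
  have "AE x in lebesgue. x \<in> ?Box \<longrightarrow> ?Good x" by (rule AE_I'[OF nN sub])
  then have ae: "AE x in lborel. x \<in> ?Box \<longrightarrow> ?Good x" by (simp add: AE_completion_iff)
  have "?Box = cbox 0 1" by (auto simp: mem_box_cart)
  then have boxm: "?Box \<in> sets lborel" by simp
  show ?thesis by (rule AE_uniform_measureI[OF boxm ae])
qed

end

theorem mainTheorem8:
  fixes p1 :: real and m1 m2 :: "real^2"
  assumes "0 < p1" "p1 < 1"
    and "\<forall>i. 0 \<le> m1$i \<and> m1$i \<le> 1"
    and "\<forall>i. 0 \<le> m2$i \<and> m2$i \<le> 1"
    and "sigma12 p1 m1 m2 \<noteq> 0"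
    and "\<forall>i. 0 < (xbar p1 m1 m2)$i \<and> (xbar p1 m1 m2)$i < 1"
  shows "AE mu0 in uniform_measure lborel {mu::real^2. \<forall>i. 0 \<le> mu$i \<and> mu$i \<le> 1}.
           (\<exists>C r. 0 < r \<and> r < 1 \<and>
              (\<forall>t. infdist (lam p1 m1 m2 ((em_mu1 p1 m1 m2 ^^ t) mu0)) pos_regions \<le> C * r ^ t))
         \<and> filterlim (\<lambda>t. \<Prod>s<t. Z1 p1 m1 m2 ((em_mu1 p1 m1 m2 ^^ s) mu0)) at_top sequentially"
  proof -
  interpret emsetup p1 m1 m2 unfolding emsetup_def using assms by blast
  show ?thesis using main_AE by simp
qed

end
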